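(* The smallest cardinality of a self-binding group is at most $\mathfrak{se}$.
   Context: All groups are abelian. A group is torsionless if it embeds in $\mathbb{Z}^I$ for some set $I$. Rank means torsion-free rank. A group $G$ binds a subgroup $H$ if every homomorphism from $G$ to a free abelian group maps $H$ into a group of finite rank. A torsionless group is self-binding if it has infinite rank and binds itself. A torsionless group $G$ exhibits the Specker phenomenon if there is a sequence $(a_n)_{n\in\omega}$ of nonzero elements of $G$ such that every homomorphism $G\to\mathbb{Z}$ maps all but finitely many $a_n$ to $0$. $\mathfrak{se}$ denotes the smallest cardinality of a group exhibiting the Specker phenomenon (equivalently, the smallest cardinality of a group $G$ with $\mathbb{Z}^{(\omega)}\subseteq G\subseteq\mathbb{Z}^\omega$ such that every homomorphism $G\to\mathbb{Z}$ vanishes on all but finitely many standard unit vectors $e_n$). *)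

theory Defs
  imports Main "HOL-Library.Function_Algebras"
begin

text \<open>Torsionless groups are represented as subgroups of a product Z^X,
  i.e. as sets of functions X \<Rightarrow> int closed under the pointwise operations.
  Every such set is torsionless, and every torsionless group arises this way.\<close>

definition subgrp :: "('x \<Rightarrow> int) set \<Rightarrow> bool" where
  "subgrp G \<longleftrightarrow> 0 \<in> G \<and> (\<forall>x\<in>G. \<forall>y\<in>G. x + y \<in> G) \<and> (\<forall>x\<in>G. - x \<in> G)"

definition additive_on :: "'a set \<Rightarrow> ('a::plus \<Rightarrow> 'b::plus) \<Rightarrow> bool" where
  "additive_on G h \<longleftrightarrow> (\<forall>x\<in>G. \<forall>y\<in>G. h (x + y) = h x + h y)"

definition free_ab :: "('j \<Rightarrow> int) set" where
  "free_ab = {v. finite {j. v j \<noteq> 0}}"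

definition Z_indep :: "('y \<Rightarrow> int) set \<Rightarrow> bool" where
  "Z_indep A \<longleftrightarrow> finite A \<and>
     (\<forall>c :: ('y \<Rightarrow> int) \<Rightarrow> int. (\<forall>j. (\<Sum>a\<in>A. c a * a j) = 0) \<longrightarrow> (\<forall>a\<in>A. c a = 0))"

definition finite_rank :: "('y \<Rightarrow> int) set \<Rightarrow> bool" where
  "finite_rank S \<longleftrightarrow> (\<exists>n::nat. \<forall>A. A \<subseteq> S \<longrightarrow> Z_indep A \<longrightarrow> card A \<le> n)"

text \<open>The free abelian groups are Z^(J) with J a set of elements
  of G's ambient type (this suffices, since the image of G is free of rank \<le> |G|).\<close>
definition binds :: "('x \<Rightarrow> int) set \<Rightarrow> ('x \<Rightarrow> int) set \<Rightarrow> bool" where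
  "binds G S \<longleftrightarrow>
     (\<forall>h :: ('x \<Rightarrow> int) \<Rightarrow> (('x \<Rightarrow> int) \<Rightarrow> int).
        additive_on G h \<longrightarrow> h ` G \<subseteq> free_ab \<longrightarrow> finite_rank (h ` S))"

definition self_binding :: "('x \<Rightarrow> int) set \<Rightarrow> bool" where
  "self_binding G \<longleftrightarrow> subgrp G \<and> \<not> finite_rank G \<and> binds G G"

definition specker :: "('x \<Rightarrow> int) set \<Rightarrow> bool" where
  "specker G \<longleftrightarrow> subgrp G \<and>
     (\<exists>a :: nat \<Rightarrow> ('x \<Rightarrow> int). (\<forall>n. a n \<in> G \<and> a n \<noteq> 0) \<and>
        (\<forall>f :: ('x \<Rightarrow> int) \<Rightarrow> int. additive_on G f \<longrightarrow> finite {n. f (a n) \<noteq> 0}))"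

end

theory Submission
  imports Defs Complex_Main "HOL-Library.Nat_Bijection"
begin

unbundle cardinal_syntax


lemma sum_fun_apply: "(\<Sum>s\<in>S. f s) x = (\<Sum>s\<in>S. (f s :: 'a \<Rightarrow> 'b::comm_monoid_add) x)"
  by (induction S rule: infinite_finite_induct) (auto simp: plus_fun_def)

definition qscale :: "rat \<Rightarrow> ('j \<Rightarrow> rat) \<Rightarrow> ('j \<Rightarrow> rat)" where
  "qscale c v = (\<lambda>j. c * v j)"

interpretation qvs: vector_space "qscale :: rat \<Rightarrow> ('j \<Rightarrow> rat) \<Rightarrow> ('j \<Rightarrow> rat)"
  by unfold_locales (auto simp: qscale_def fun_eq_iff algebra_simps plus_fun_def)

lemma common_denom:
  assumes "finite T"
  shows "\<exists>d::int. d > 0 \<and> (\<forall>v\<in>T. \<exists>k::int. of_int d * (u v :: rat) = of_int k)"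
proof -
  define d where "d = (\<Prod>v\<in>T. snd (quotient_of (u v)))"
  have "d > 0" unfolding d_def by (rule prod_pos) (auto simp: quotient_of_denom_pos')
  moreover have "\<exists>k::int. of_int d * u v = of_int k" if "v \<in> T" for v
  proof -
    obtain p q where pq: "quotient_of (u v) = (p, q)" by (cases "quotient_of (u v)")
    have q: "q > 0" using quotient_of_denom_pos[OF pq] .
    have "q dvd d" unfolding d_def using that assms pq
      by (metis dvd_prodI snd_conv)
    then obtain r where r: "d = q * r" by (auto elim: dvdE)
    have "u v = of_int p / of_int q" using quotient_of_div[OF pq] .
    hence "of_int d * u v = of_int (r * p)" using q r by (simp add: field_simps)
    thus ?thesis by blast
  qed
  ultimately show ?thesis by blast
qed

lemma Zindep_card_bound:
  fixes A :: "('j \<Rightarrow> int) set"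
  assumes U: "finite U" and A: "Z_indep A" and sub: "\<forall>a\<in>A. \<forall>j. j \<notin> U \<longrightarrow> a j = 0"
  shows "card A \<le> card U"
proof -
  define img :: "('j \<Rightarrow> int) \<Rightarrow> ('j \<Rightarrow> rat)" where "img a = (\<lambda>j. of_int (a j))" for a
  have inj: "inj img" unfolding img_def inj_def by (auto simp: fun_eq_iff)
  define R where "R = img ` A"
  define delta :: "'j \<Rightarrow> ('j \<Rightarrow> rat)" where "delta u = (\<lambda>j. if j = u then 1 else 0)" for u
  define T where "T = delta ` U"
  have finA: "finite A" using A by (simp add: Z_indep_def)
  have "R \<subseteq> qvs.span T"
  proof
    fix v assume "v \<in> R"
    then obtain a where a: "a \<in> A" "v = img a" by (auto simp: R_def)
    have "v = (\<Sum>u\<in>U. qscale (v u) (delta u))"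
    proof
      fix j
      show "v j = (\<Sum>u\<in>U. qscale (v u) (delta u)) j"
      proof -
        have "(\<Sum>u\<in>U. qscale (v u) (delta u)) j = (\<Sum>u\<in>U. if j = u then v u else 0)"
          by (auto simp: sum_fun_apply qscale_def delta_def intro!: sum.cong)
        also have "\<dots> = v j" using a sub U by (auto simp: sum.delta' img_def)
        finally show ?thesis by simp
      qed
    qed
    also have "\<dots> \<in> qvs.span T"
      by (rule qvs.span_sum) (auto intro: qvs.span_scale qvs.span_base simp: T_def)
    finally show "v \<in> qvs.span T" .
  qed
  moreover have "qvs.independent R"
  proof
    assume "qvs.dependent R"
    then obtain S u where S: "finite S" "S \<subseteq> R" "(\<Sum>v\<in>S. qscale (u v) v) = 0" and nz: "\<exists>v\<in>S. u v \<noteq> 0"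
      unfolding qvs.dependent_explicit by blast
    obtain d where d: "d > 0" "\<forall>v\<in>S. \<exists>k::int. of_int d * u v = of_int k"
      using common_denom[OF S(1)] by blast
    define c where "c a = (if img a \<in> S then (SOME k::int. of_int d * u (img a) = of_int k) else 0)" for a
    have c: "of_int (c a) = (if img a \<in> S then of_int d * u (img a) else 0)" for a
      using d(2) unfolding c_def by (auto intro: someI2_ex)
    have "\<forall>j. (\<Sum>a\<in>A. c a * a j) = 0"
    proof
      fix j
      have "(of_int (\<Sum>a\<in>A. c a * a j) :: rat) = (\<Sum>a\<in>A. of_int (c a) * of_int (a j))" by simp
      also have "\<dots> = (\<Sum>a\<in>{a\<in>A. img a \<in> S}. of_int d * (u (img a) * img a j))"
        by (rule sum.mono_neutral_cong_right) (auto simp: finA c img_def)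
      also have "\<dots> = of_int d * (\<Sum>v\<in>img ` {a\<in>A. img a \<in> S}. u v * v j)"
        by (subst sum.reindex) (auto simp: sum_distrib_left intro: inj_on_subset[OF inj])
      also have "img ` {a\<in>A. img a \<in> S} = S" using S(2) by (auto simp: R_def)
      also have "(\<Sum>v\<in>S. u v * v j) = (\<Sum>v\<in>S. qscale (u v) v) j"
        by (simp add: sum_fun_apply qscale_def)
      also have "\<dots> = 0" using S(3) by simp
      finally have "(of_int (\<Sum>a\<in>A. c a * a j) :: rat) = 0" by simp
      thus "(\<Sum>a\<in>A. c a * a j) = 0" by (simp only: of_int_eq_0_iff)
    qed
    hence "\<forall>a\<in>A. c a = 0" using A unfolding Z_indep_def by blast
    moreover obtain v where v: "v \<in> S" "u v \<noteq> 0" using nz by blast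
    moreover obtain a where "a \<in> A" "v = img a" using v S(2) by (auto simp: R_def)
    ultimately have "(of_int (c a) :: rat) = 0" by simp
    thus False using c[of a] v d(1) \<open>v = img a\<close> by simp
  qed
  ultimately have "card R \<le> card T" using qvs.independent_span_bound[of T R] U by (auto simp: T_def)
  moreover have "card R = card A" unfolding R_def by (rule card_image) (rule inj_on_subset[OF inj], simp)
  moreover have "card T \<le> card U" unfolding T_def by (rule card_image_le[OF U])
  ultimately show ?thesis by simp
qed

lemma finite_rank_supp:
  fixes S :: "('j \<Rightarrow> int) set"
  assumes "finite U" "\<forall>v\<in>S. \<forall>j. j \<notin> U \<longrightarrow> v j = 0"
  shows "finite_rank S"
  unfolding finite_rank_def using Zindep_card_bound[OF assms(1)] assms(2) by blast



definition supp :: "('j \<Rightarrow> int) \<Rightarrow> 'j set" where "supp v = {j. v j \<noteq> 0}"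

lemma additive_coord:
  assumes "additive_on H h" shows "additive_on H (\<lambda>x. h x j)"
  using assms by (auto simp: additive_on_def plus_fun_def)

lemma binds_criterion:
  fixes H :: "('x \<Rightarrow> int) set" and b :: "nat \<Rightarrow> 'x \<Rightarrow> int"
  assumes bH: "\<forall>n. b n \<in> H"
    and i: "\<forall>f::('x\<Rightarrow>int)\<Rightarrow>int. additive_on H f \<longrightarrow> finite {n. f (b n) \<noteq> 0}"
    and ii: "\<forall>f::('x\<Rightarrow>int)\<Rightarrow>int. additive_on H f \<longrightarrow> (\<forall>n. f (b n) = 0) \<longrightarrow> (\<forall>x\<in>H. f x = 0)"
  shows "binds H H"
  unfolding binds_def
proof (intro allI impI)
  fix h :: "('x \<Rightarrow> int) \<Rightarrow> (('x \<Rightarrow> int) \<Rightarrow> int)"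
  assume hadd: "additive_on H h" and hfree: "h ` H \<subseteq> free_ab"
  have finsupp: "finite (supp (h x))" if "x \<in> H" for x
    using hfree that by (auto simp: free_ab_def supp_def)
  have coordfin: "finite {n. h (b n) j \<noteq> 0}" for j
    using i additive_coord[OF hadd, of j] by blast
  define W where "W = {n. h (b n) \<noteq> 0}"
  have Wfin: "finite W"
  proof (rule ccontr)
    assume Winf: "infinite W"
    have ex: "\<exists>n. n \<in> W \<and> supp (h (b n)) \<inter> F = {}" if "finite F" for F
    proof -
      have "{n. supp (h (b n)) \<inter> F \<noteq> {}} = (\<Union>j\<in>F. {n. h (b n) j \<noteq> 0})"
        by (auto simp: supp_def)
      hence "finite {n. supp (h (b n)) \<inter> F \<noteq> {}}" using that coordfin by auto
      hence "infinite (W - {n. supp (h (b n)) \<inter> F \<noteq> {}})" using Winf by (metis Diff_infinite_finite)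
      then obtain n where "n \<in> W - {n. supp (h (b n)) \<inter> F \<noteq> {}}" by (metis finite.emptyI ex_in_conv)
      thus ?thesis by blast
    qed
    define N where "N F = (SOME n. n \<in> W \<and> supp (h (b n)) \<inter> F = {})" for F
    have N: "N F \<in> W \<and> supp (h (b (N F))) \<inter> F = {}" if "finite F" for F
      unfolding N_def using ex[OF that] by (rule someI_ex)
    define Fs where "Fs = rec_nat {} (\<lambda>k F. F \<union> supp (h (b (N F))))"
    have Fs0: "Fs 0 = {}" and FsS: "Fs (Suc k) = Fs k \<union> supp (h (b (N (Fs k))))" for k
      by (simp_all add: Fs_def)
    have Fsfin: "finite (Fs k)" for k
      by (induction k) (auto simp: Fs0 FsS intro!: finsupp bH[rule_format])
    define nk where "nk k = N (Fs k)" for k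
    have nkW: "nk k \<in> W" and nkdisj: "supp (h (b (nk k))) \<inter> Fs k = {}" for k
      using N[OF Fsfin[of k]] by (auto simp: nk_def)
    have Fsmono: "k \<le> m \<Longrightarrow> Fs k \<subseteq> Fs m" for k m
      by (induction m) (auto simp: FsS le_Suc_eq)
    have disj: "supp (h (b (nk k))) \<inter> supp (h (b (nk m))) = {}" if "k \<noteq> m" for k m
    proof -
      have "supp (h (b (nk k))) \<subseteq> Fs m" if "k < m" for k m
        using Fsmono[of "Suc k" m] that FsS[of k] by (auto simp: nk_def)
      thus ?thesis using that nkdisj by (cases "k < m") (blast, metis inf_commute linorder_neqE_nat nkdisj Int_mono disjoint_iff subsetD)
    qed
    have nonempty: "supp (h (b (nk k))) \<noteq> {}" for k
      using nkW[of k] by (auto simp: W_def supp_def fun_eq_iff)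
    define jk where "jk k = (SOME j. j \<in> supp (h (b (nk k))))" for k
    have jk: "jk k \<in> supp (h (b (nk k)))" for k
      unfolding jk_def using nonempty[of k] by (metis ex_in_conv someI_ex)
    define S where "S = range jk"
    define f where "f x = sum (\<lambda>j. h x j) (S \<inter> supp (h x))" for x
    have fT: "f x = sum (\<lambda>j. h x j) T" if "x \<in> H" "finite T" "S \<inter> supp (h x) \<subseteq> T" "T \<subseteq> S" for x T
      unfolding f_def using that by (intro sum.mono_neutral_left) (auto simp: supp_def)
    have fadd: "additive_on H f"
      unfolding additive_on_def
    proof (intro ballI)
      fix x y assume xy: "x \<in> H" "y \<in> H"
      define T where "T = S \<inter> (supp (h x) \<union> supp (h y))"
      have Tfin: "finite T" using finsupp xy by (auto simp: T_def)
      have hxy: "h (x + y) = h x + h y" using hadd xy by (simp add: additive_on_def)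
      have "x + y \<in> H \<or> True" by simp
      have "f (x + y) = sum (\<lambda>j. h (x + y) j) (S \<inter> supp (h (x + y)))" by (simp add: f_def)
      also have "\<dots> = sum (\<lambda>j. h (x + y) j) T"
        by (intro sum.mono_neutral_left Tfin) (auto simp: T_def supp_def hxy)
      also have "\<dots> = sum (\<lambda>j. h x j) T + sum (\<lambda>j. h y j) T" by (simp add: hxy sum.distrib)
      also have "sum (\<lambda>j. h x j) T = f x" by (rule fT[OF xy(1) Tfin, symmetric]) (auto simp: T_def)
      also have "sum (\<lambda>j. h y j) T = f y" by (rule fT[OF xy(2) Tfin, symmetric]) (auto simp: T_def)
      finally show "f (x + y) = f x + f y" .
    qed
    have fnk: "f (b (nk m)) \<noteq> 0" for m
    proof -
      have "S \<inter> supp (h (b (nk m))) = {jk m}"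
        using jk disj by (auto simp: S_def) (metis disjoint_iff jk)
      thus ?thesis using jk[of m] by (simp add: f_def supp_def)
    qed
    have "inj nk"
    proof (rule injI)
      fix k m assume "nk k = nk m"
      thus "k = m" using disj[of k m] nonempty[of k] by auto
    qed
    hence "infinite (range nk)" using finite_imageD by blast
    moreover have "range nk \<subseteq> {n. f (b n) \<noteq> 0}" using fnk by auto
    ultimately have "infinite {n. f (b n) \<noteq> 0}" using finite_subset by blast
    thus False using i fadd by blast
  qed
  define U where "U = (\<Union>n\<in>W. supp (h (b n)))"
  have Ufin: "finite U" unfolding U_def using Wfin finsupp bH by auto
  have "\<forall>v\<in>h ` H. \<forall>j. j \<notin> U \<longrightarrow> v j = 0"
  proof (intro ballI allI impI)
    fix v j assume v: "v \<in> h ` H" and j: "j \<notin> U"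
    have "\<forall>n. h (b n) j = 0"
    proof
      fix n show "h (b n) j = 0"
        using j by (cases "n \<in> W") (auto simp: U_def supp_def W_def)
    qed
    hence "\<forall>x\<in>H. h x j = 0" using ii additive_coord[OF hadd, of j] by blast
    thus "v j = 0" using v by auto
  qed
  thus "finite_rank (h ` H)" by (rule finite_rank_supp[OF Ufin])
qed



definition Inv :: "('x \<Rightarrow> int) set \<Rightarrow> (nat \<Rightarrow> 'x \<Rightarrow> int) \<Rightarrow> (nat \<times> (('x \<Rightarrow> int) \<Rightarrow> int)) list \<Rightarrow> bool" where
  "Inv G a L \<longleftrightarrow> (\<forall>(m,\<psi>)\<in>set L. additive_on G \<psi> \<and> \<psi> (a m) \<noteq> 0) \<and>
     (\<forall>(m,\<psi>)\<in>set L. \<forall>(m',\<psi>')\<in>set L. m \<noteq> m' \<longrightarrow> \<psi> (a m') = 0) \<and> distinct (map fst L)"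

lemma elim_step:
  fixes G :: "('x \<Rightarrow> int) set" and \<phi>0 :: "('x \<Rightarrow> int) \<Rightarrow> int"
  assumes "Inv G a L" "\<forall>(m,\<psi>)\<in>set L. \<psi> (a n) = 0" "additive_on G \<phi>0" "\<phi>0 (a n) \<noteq> 0"
  shows "\<exists>\<phi>::('x \<Rightarrow> int) \<Rightarrow> int. additive_on G \<phi> \<and> \<phi> (a n) \<noteq> 0 \<and> (\<forall>(m,\<psi>)\<in>set L. \<phi> (a m) = 0)"
  using assms
proof (induction L)
  case Nil
  thus ?case by simp blast
next
  case (Cons p L)
  obtain m \<psi> where p: "p = (m, \<psi>)" by (cases p)
  have InvL: "Inv G a L" using Cons.prems(1) by (auto simp: Inv_def)
  obtain \<phi>1 :: "('x \<Rightarrow> int) \<Rightarrow> int" where \<phi>1: "additive_on G \<phi>1" "\<phi>1 (a n) \<noteq> 0" "\<forall>(m,\<psi>)\<in>set L. \<phi>1 (a m) = 0"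
    using Cons.IH[OF InvL] Cons.prems by auto
  have m\<psi>: "additive_on G \<psi>" "\<psi> (a m) \<noteq> 0" "\<psi> (a n) = 0"
    using Cons.prems p by (auto simp: Inv_def)
  have zero: "\<psi> (a m') = 0" if "(m', \<psi>') \<in> set L" for m' \<psi>'
  proof -
    have "m \<noteq> m'" using Cons.prems(1) p that by (force simp: Inv_def)
    thus ?thesis using Cons.prems(1) p that by (auto simp: Inv_def)
  qed
  define \<phi> where "\<phi> x = \<psi> (a m) * \<phi>1 x - \<phi>1 (a m) * \<psi> x" for x
  have "additive_on G \<phi>" using \<phi>1(1) m\<psi>(1) by (auto simp: additive_on_def \<phi>_def algebra_simps)
  moreover have "\<phi> (a n) \<noteq> 0" using \<phi>1(2) m\<psi> by (simp add: \<phi>_def)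
  moreover have "\<forall>(m',\<psi>')\<in>set (p # L). \<phi> (a m') = 0"
    using p \<phi>1(3) zero by (auto simp: \<phi>_def)
  ultimately show ?case by blast
qed

lemma good_step:
  fixes G :: "('x \<Rightarrow> int) set" and a :: "nat \<Rightarrow> 'x \<Rightarrow> int"
  assumes Gsp: "\<forall>f::('x\<Rightarrow>int)\<Rightarrow>int. additive_on G f \<longrightarrow> finite {n. f (a n) \<noteq> 0}"
    and anz: "\<forall>n. a n \<noteq> 0" and inv: "Inv G a L"
  shows "\<exists>n (\<phi>::('x \<Rightarrow> int) \<Rightarrow> int). additive_on G \<phi> \<and> \<phi> (a n) \<noteq> 0 \<and> (\<forall>(m,\<psi>)\<in>set L. \<psi> (a n) = 0 \<and> \<phi> (a m) = 0)"
proof -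
  have "finite (\<Union>p\<in>set L. {n. snd p (a n) \<noteq> 0})"
    using Gsp inv by (auto simp: Inv_def)
  then obtain n where n: "n \<notin> (\<Union>p\<in>set L. {n. snd p (a n) \<noteq> 0})"
    using ex_new_if_finite[OF infinite_UNIV_nat] by blast
  obtain i where i: "a n i \<noteq> 0" using anz[rule_format, of n] by (auto simp: fun_eq_iff)
  have add0: "additive_on G (\<lambda>x. x i)" by (simp add: additive_on_def)
  have z: "\<forall>(m,\<psi>)\<in>set L. \<psi> (a n) = 0" using n by auto
  obtain \<phi> :: "('x \<Rightarrow> int) \<Rightarrow> int" where "additive_on G \<phi> \<and> \<phi> (a n) \<noteq> 0 \<and> (\<forall>(m,\<psi>)\<in>set L. \<phi> (a m) = 0)"
    using elim_step[OF inv z add0] i by auto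
  thus ?thesis using z by fast
qed

lemma biorth:
  fixes G :: "('x \<Rightarrow> int) set" and a :: "nat \<Rightarrow> 'x \<Rightarrow> int"
  assumes Gsp: "\<forall>f::('x\<Rightarrow>int)\<Rightarrow>int. additive_on G f \<longrightarrow> finite {n. f (a n) \<noteq> 0}"
    and anz: "\<forall>n. a n \<noteq> 0"
  shows "\<exists>nn (\<phi>::nat \<Rightarrow> ('x \<Rightarrow> int) \<Rightarrow> int). (\<forall>k. additive_on G (\<phi> k)) \<and> (\<forall>k. \<phi> k (a (nn k)) \<noteq> 0) \<and>
                 (\<forall>k m. k \<noteq> m \<longrightarrow> \<phi> k (a (nn m)) = 0)"
proof -
  define good :: "(nat \<times> (('x \<Rightarrow> int) \<Rightarrow> int)) list \<Rightarrow> nat \<times> (('x \<Rightarrow> int) \<Rightarrow> int) \<Rightarrow> bool" where "good L p \<longleftrightarrow> additive_on G (snd p) \<and> snd p (a (fst p)) \<noteq> 0 \<and>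
      (\<forall>(m,\<psi>)\<in>set L. \<psi> (a (fst p)) = 0 \<and> snd p (a m) = 0)" for L p
  define step where "step L = (SOME p. good L p)" for L
  have stepgood: "good L (step L)" if invL: "Inv G a L" for L
  proof -
    obtain n \<phi> where "good L (n, \<phi>)" using good_step[OF Gsp anz invL] by (auto simp: good_def)
    thus ?thesis unfolding step_def by (rule someI)
  qed
  have Inv_app: "Inv G a (L @ [p])" if "Inv G a L" "good L p" for L p
  proof -
    obtain n \<phi> where p: "p = (n, \<phi>)" by (cases p)
    have "n \<notin> fst ` set L"
    proof
      assume "n \<in> fst ` set L"
      then obtain \<psi> where "(n, \<psi>) \<in> set L" by auto
      thus False using that p by (auto simp: Inv_def good_def)
    qed
    thus ?thesis using that p by (auto simp: Inv_def good_def)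
  qed
  define P where "P = rec_nat [] (\<lambda>k L. L @ [step L])"
  have P0: "P 0 = []" and PS: "P (Suc k) = P k @ [step (P k)]" for k by (simp_all add: P_def)
  have InvP: "Inv G a (P k)" for k
  proof (induction k)
    case 0 show ?case by (simp add: P0 Inv_def)
  next
    case (Suc k) show ?case unfolding PS by (rule Inv_app[OF Suc stepgood[OF Suc]])
  qed
  have lenP: "length (P k) = k" for k by (induction k) (auto simp: P0 PS)
  have Pnth: "j < k \<Longrightarrow> P k ! j = P (Suc j) ! j" for j k
  proof (induction k)
    case 0 thus ?case by simp
  next
    case (Suc k)
    show ?case
    proof (cases "j < k")
      case True thus ?thesis using Suc by (simp add: PS nth_append lenP)
    next
      case False thus ?thesis using Suc.prems by (simp add: PS nth_append lenP) (metis less_SucE)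
    qed
  qed
  define nn where "nn k = fst (P (Suc k) ! k)" for k
  define \<phi> where "\<phi> k = snd (P (Suc k) ! k)" for k
  have mem: "(nn k, \<phi> k) \<in> set (P K)" if "k < K" for k K
    using Pnth[OF that] lenP[of K] that by (metis nn_def \<phi>_def nth_mem prod.collapse)
  have "additive_on G (\<phi> k) \<and> \<phi> k (a (nn k)) \<noteq> 0" for k
    using InvP[of "Suc k"] mem[of k "Suc k"] by (auto simp: Inv_def)
  moreover have "\<phi> k (a (nn m)) = 0" if "k \<noteq> m" for k m
  proof -
    define K where "K = Suc (max k m)"
    have kK: "k < K" "m < K" by (auto simp: K_def)
    have "nn k \<noteq> nn m"
    proof
      assume eq: "nn k = nn m"
      have "map fst (P K) ! k = map fst (P K) ! m"
        using eq Pnth[OF kK(1)] Pnth[OF kK(2)] lenP[of K] kK by (simp add: nn_def)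
      moreover have d: "distinct (map fst (P K))" using InvP[of K] by (simp add: Inv_def)
      ultimately show False using nth_eq_iff_index_eq[OF d, of k m] lenP[of K] kK that by simp
    qed
    moreover have "\<forall>(m,\<psi>)\<in>set (P K). \<forall>(m',\<psi>')\<in>set (P K). m \<noteq> m' \<longrightarrow> \<psi> (a m') = 0"
      using InvP[of K] unfolding Inv_def by blast
    ultimately show ?thesis using mem[OF kK(1)] mem[OF kK(2)] by blast
  qed
  ultimately show ?thesis by blast
qed



definition smul :: "int \<Rightarrow> ('a \<Rightarrow> int) \<Rightarrow> ('a \<Rightarrow> int)" where "smul c u = (\<lambda>n. c * u n)"

lemma smul_simps:
  "smul 1 u = u" "smul 0 u = 0" "smul c (u + v) = smul c u + smul c v" "smul (c + d) u = smul c u + smul d u"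
  "smul c (- u) = - smul c u" "smul (- c) u = - smul c u" "smul c (smul d u) = smul (c * d) u" "smul c 0 = 0"
  by (auto simp: smul_def fun_eq_iff algebra_simps)

lemma subgrp_diff: "subgrp H \<Longrightarrow> x \<in> H \<Longrightarrow> y \<in> H \<Longrightarrow> x - y \<in> H"
  unfolding subgrp_def by (metis diff_conv_add_uminus)

lemma int_nat_cases: obtains n where "c = int n" | n where "c = - int n"
  by (metis int_cases2)

lemma subgrp_smul:
  assumes H: "subgrp H" and x: "x \<in> H" shows "smul c x \<in> H"
proof -
  have nat: "smul (int n) x \<in> H" for n
  proof (induction n)
    case 0 thus ?case using H by (simp add: smul_def subgrp_def zero_fun_def)
  next
    case (Suc n)
    have e: "smul (int (Suc n)) x = smul (int n) x + x" by (simp add: smul_def fun_eq_iff algebra_simps)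
    have "smul (int n) x + x \<in> H" using Suc x H unfolding subgrp_def by blast
    thus ?case unfolding e .
  qed
  show ?thesis
  proof (cases c rule: int_nat_cases)
    case 1 thus ?thesis using nat by simp
  next
    case (2 m)
    have "- smul (int m) x \<in> H" using nat[of m] H unfolding subgrp_def by blast
    thus ?thesis using 2 by (simp add: smul_simps)
  qed
qed

lemma add_zero: "subgrp H \<Longrightarrow> additive_on H f \<Longrightarrow> f 0 = (0::int)"
  unfolding subgrp_def additive_on_def by (metis add.right_neutral add_cancel_right_right)

lemma add_neg: "subgrp H \<Longrightarrow> additive_on H f \<Longrightarrow> x \<in> H \<Longrightarrow> f (- x) = - (f x :: int)"
  using add_zero[of H f] unfolding subgrp_def additive_on_def
  by (metis add.right_inverse add_eq_0_iff)

lemma add_diff: "subgrp H \<Longrightarrow> additive_on H f \<Longrightarrow> x \<in> H \<Longrightarrow> y \<in> H \<Longrightarrow> f (x - y) = f x - (f y :: int)"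
  using add_neg[of H f y] unfolding subgrp_def additive_on_def
  by (metis diff_conv_add_uminus)

lemma add_smul:
  assumes H: "subgrp H" and f: "additive_on H f" and x: "x \<in> H" shows "f (smul c x) = c * (f x :: int)"
proof -
  have nat: "f (smul (int n) x) = int n * f x" for n
  proof (induction n)
    case 0 thus ?case using add_zero[OF H f] by (simp add: smul_def zero_fun_def)
  next
    case (Suc n)
    have e: "smul (int (Suc n)) x = smul (int n) x + x" by (simp add: smul_def fun_eq_iff algebra_simps)
    have "f (smul (int n) x + x) = f (smul (int n) x) + f x"
      using f x subgrp_smul[OF H x, of "int n"] unfolding additive_on_def by blast
    hence "f (smul (int (Suc n)) x) = int n * f x + f x" unfolding e by (simp only: Suc.IH)
    thus ?case by (simp add: algebra_simps)
  qed
  show ?thesis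
  proof (cases c rule: int_nat_cases)
    case 1 thus ?thesis using nat by simp
  next
    case (2 m) thus ?thesis using nat[of m] add_neg[OF H f subgrp_smul[OF H x, of "int m"]] by (simp add: smul_simps)
  qed
qed

definition lc :: "(int \<times> ('a \<Rightarrow> int)) list \<Rightarrow> ('a \<Rightarrow> int)" where
  "lc l = sum_list (map (\<lambda>(c,u). smul c u) l)"

definition Mset :: "('a \<Rightarrow> int) set \<Rightarrow> ('a \<Rightarrow> int) set" where
  "Mset S = lc ` {l. set l \<subseteq> UNIV \<times> S}"

definition Hset :: "('a \<Rightarrow> int) set \<Rightarrow> ('a \<Rightarrow> int) set" where
  "Hset S = {x. \<exists>N::int. N > 0 \<and> smul N x \<in> Mset S}"

lemma lc_simps: "lc [] = 0" "lc (p # l) = smul (fst p) (snd p) + lc l" "lc (l1 @ l2) = lc l1 + lc l2"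
  by (auto simp: lc_def split: prod.splits)

lemma lc_neg: "lc (map (\<lambda>(c,u). (- c, u)) l) = - lc l"
  by (induction l) (auto simp: lc_simps smul_def fun_eq_iff algebra_simps)

lemma lc_scale: "lc (map (\<lambda>(c,u). (d * c, u)) l) = smul d (lc l)"
  by (induction l) (auto simp: lc_simps smul_def fun_eq_iff algebra_simps)

lemma M_zero: "0 \<in> Mset S"
  unfolding Mset_def by (rule image_eqI[of _ _ "[]"]) (auto simp: lc_simps)

lemma M_add: "x \<in> Mset S \<Longrightarrow> y \<in> Mset S \<Longrightarrow> x + y \<in> Mset S"
  unfolding Mset_def by (auto intro!: image_eqI[of _ _ "_ @ _"] simp: lc_simps)

lemma M_neg: "x \<in> Mset S \<Longrightarrow> - x \<in> Mset S"
  unfolding Mset_def by (auto intro!: image_eqI[of _ _ "map (\<lambda>(c,u). (- c, u)) _"] simp: lc_neg)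

lemma M_scale: "x \<in> Mset S \<Longrightarrow> smul d x \<in> Mset S"
  unfolding Mset_def by (auto intro!: image_eqI[of _ _ "map (\<lambda>(c,u). (d * c, u)) _"] simp: lc_scale)

lemma M_gen: "u \<in> S \<Longrightarrow> u \<in> Mset S"
  unfolding Mset_def by (rule image_eqI[of _ _ "[(1,u)]"]) (auto simp: lc_simps smul_simps)

lemma M_subgrp: "subgrp (Mset S)"
  unfolding subgrp_def using M_zero M_add M_neg by blast

lemma M_sub_H: "Mset S \<subseteq> Hset S"
  unfolding Hset_def by (auto intro: exI[of _ 1] simp: smul_simps)

lemma H_subgrp: "subgrp (Hset S)"
proof -
  have "0 \<in> Hset S" using M_sub_H M_zero by blast
  moreover have "x + y \<in> Hset S" if hxy: "x \<in> Hset S" "y \<in> Hset S" for x y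
  proof -
    obtain N1 where N1: "N1 > 0" "smul N1 x \<in> Mset S" using hxy(1) unfolding Hset_def by blast
    obtain N2 where N2: "N2 > 0" "smul N2 y \<in> Mset S" using hxy(2) unfolding Hset_def by blast
    note N = N1 N2
    have "smul (N1 * N2) (x + y) = smul N2 (smul N1 x) + smul N1 (smul N2 y)"
      by (simp add: smul_simps mult.commute)
    also have "\<dots> \<in> Mset S" using N by (blast intro: M_add M_scale)
    finally show ?thesis using N unfolding Hset_def by (intro CollectI exI[of _ "N1 * N2"]) simp
  qed
  moreover have "- x \<in> Hset S" if "x \<in> Hset S" for x
    using that M_neg by (fastforce simp: Hset_def smul_simps)
  ultimately show ?thesis by (simp add: subgrp_def)
qed

lemma f_lc:
  assumes H: "subgrp H" and f: "additive_on H f" and l: "set l \<subseteq> UNIV \<times> H"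
  shows "lc l \<in> H \<and> f (lc l) = sum_list (map (\<lambda>(c,u). c * (f u :: int)) l)"
  using l
proof (induction l)
  case Nil thus ?case using H add_zero[OF H f] unfolding subgrp_def by (simp only: lc_simps list.map sum_list.Nil)
next
  case (Cons p l)
  obtain c u where p: "p = (c, u)" by (cases p)
  have u: "u \<in> H" using Cons.prems p by auto
  have IH: "lc l \<in> H \<and> f (lc l) = sum_list (map (\<lambda>(c,u). c * f u) l)" using Cons by auto
  have s: "smul c u \<in> H" by (rule subgrp_smul[OF H u])
  have e: "lc (p # l) = smul c u + lc l" by (simp add: lc_simps p)
  have m: "lc (p # l) \<in> H" unfolding e using s IH H unfolding subgrp_def by blast
  have "f (lc (p # l)) = f (smul c u) + f (lc l)" unfolding e using s IH f unfolding additive_on_def by blast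
  also have "\<dots> = sum_list (map (\<lambda>(c,u). c * f u) (p # l))" using IH add_smul[OF H f u] p by simp
  finally show ?case using m by blast
qed



definition ee :: "nat \<Rightarrow> nat \<Rightarrow> int" where "ee k = (\<lambda>n. if n = k then 1 else 0)"

lemma trunc_lc: "lc (map (\<lambda>n. (w n, ee n)) [0..<K]) = (\<lambda>m. if m < K then w m else 0)"
proof (induction K)
  case 0 thus ?case by (simp add: lc_simps zero_fun_def)
next
  case (Suc K)
  have "lc (map (\<lambda>n. (w n, ee n)) [0..<Suc K]) = lc (map (\<lambda>n. (w n, ee n)) [0..<K]) + lc [(w K, ee K)]"
    by (simp add: lc_simps(3)[symmetric])
  also have "\<dots> = (\<lambda>m. if m < Suc K then w m else 0)"
    unfolding Suc by (auto simp: lc_simps smul_def ee_def fun_eq_iff plus_fun_def zero_fun_def less_Suc_eq)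
  finally show ?case .
qed

lemma H_f_zero_sum:
  assumes f: "additive_on (Hset S) f" and l: "set l \<subseteq> UNIV \<times> S" and z: "\<forall>u\<in>S. f u = (0::int)"
  shows "f (lc l) = 0"
proof -
  have "set l \<subseteq> UNIV \<times> Hset S" using l M_gen M_sub_H by blast
  hence "f (lc l) = sum_list (map (\<lambda>(c,u). c * f u) l)" using f_lc[OF H_subgrp f] by blast
  also have "map (\<lambda>(c,u). c * f u) l = map (\<lambda>_. 0) l" using l z by (intro map_cong) auto
  finally show ?thesis by simp
qed

lemma kill_div:
  assumes eS: "range ee \<subseteq> S" and f: "additive_on (Hset S) f" and fe: "\<forall>k. f (ee k) = (0::int)"
    and w: "w \<in> Mset S" and q: "q \<ge> (2::int)" and dv: "\<forall>n. q ^ n dvd w n"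
  shows "f w = 0"
proof -
  have H: "subgrp (Hset S)" by (rule H_subgrp)
  have wH: "w \<in> Hset S" using w M_sub_H by blast
  have dvK: "q ^ K dvd f w" for K
  proof -
    define tr where "tr = lc (map (\<lambda>n. (w n, ee n)) [0..<K])"
    have trM: "tr \<in> Mset S" unfolding tr_def Mset_def using eS by (intro imageI) auto
    have trH: "tr \<in> Hset S" using trM M_sub_H by blast
    have ftr: "f tr = 0"
    proof -
      have "ee n \<in> Hset S" for n using eS M_gen[of "ee n" S] M_sub_H[of S] by auto
      hence "set (map (\<lambda>n. (w n, ee n)) [0..<K]) \<subseteq> UNIV \<times> Hset S" by auto
      hence "f tr = sum_list (map (\<lambda>(c,u). c * f u) (map (\<lambda>n. (w n, ee n)) [0..<K]))"
        unfolding tr_def using f_lc[OF H f] by blast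
      also have "\<dots> = 0" using fe by (simp add: o_def)
      finally show ?thesis .
    qed
    define w' where "w' = (\<lambda>n. if n < K then 0 else w n div q ^ K)"
    have eq: "smul (q ^ K) w' = w - tr"
    proof
      fix n
      show "smul (q ^ K) w' n = (w - tr) n"
      proof (cases "n < K")
        case True thus ?thesis by (simp add: smul_def w'_def tr_def trunc_lc)
      next
        case False
        have "q ^ K dvd q ^ n" using False by (simp add: le_imp_power_dvd)
        hence "q ^ K dvd w n" using dv dvd_trans by blast
        thus ?thesis using False by (simp add: smul_def w'_def tr_def trunc_lc)
      qed
    qed
    have "w - tr \<in> Mset S" using w trM M_add M_neg by (metis diff_conv_add_uminus)
    hence w'H: "w' \<in> Hset S" unfolding Hset_def using eq q
      by (intro CollectI exI[of _ "q ^ K"]) simp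
    have sH: "smul (q ^ K) w' \<in> Hset S" by (rule subgrp_smul[OF H w'H])
    have "w = tr + smul (q ^ K) w'" unfolding eq by simp
    hence "f w = f tr + f (smul (q ^ K) w')" using f trH sH unfolding additive_on_def by metis
    also have "\<dots> = q ^ K * f w'" using ftr add_smul[OF H f w'H] by simp
    finally show ?thesis by simp
  qed
  show ?thesis
  proof (rule ccontr)
    assume nz: "f w \<noteq> 0"
    define K where "K = nat \<bar>f w\<bar>"
    have "\<bar>q ^ K\<bar> \<le> \<bar>f w\<bar>" using dvd_imp_le_int[OF nz dvK[of K]] .
    moreover have "int K < 2 ^ K" by (rule of_nat_less_two_power)
    moreover have "(2::int) ^ K \<le> q ^ K" using q by (intro power_mono) auto
    ultimately show False using q by (simp add: K_def)
  qed
qed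

lemma H_determined:
  assumes eS: "range ee \<subseteq> S"
    and Sform: "\<forall>u\<in>S. u \<in> range ee \<or> (\<forall>n. 2 ^ n dvd u n) \<or> (\<forall>n. 3 ^ n dvd u n)"
    and f: "additive_on (Hset S) f" and fe: "\<forall>k. f (ee k) = (0::int)"
  shows "\<forall>x\<in>Hset S. f x = 0"
proof
  have z: "\<forall>u\<in>S. f u = 0"
  proof
    fix u assume u: "u \<in> S"
    have uM: "u \<in> Mset S" by (rule M_gen[OF u])
    show "f u = 0" using Sform u
    proof (elim ballE disjE)
      assume "u \<in> range ee" thus "f u = 0" using fe by auto
    next
      assume "\<forall>n. 2 ^ n dvd u n" thus "f u = 0" using kill_div[OF eS f fe uM, of 2] by simp
    next
      assume "\<forall>n. 3 ^ n dvd u n" thus "f u = 0" using kill_div[OF eS f fe uM, of 3] by simp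
    qed auto
  qed
  fix x assume "x \<in> Hset S"
  then obtain N where N: "N > 0" "smul N x \<in> Mset S" unfolding Hset_def by blast
  then obtain l where l: "set l \<subseteq> UNIV \<times> S" "smul N x = lc l" unfolding Mset_def by blast
  have "f (smul N x) = 0" using H_f_zero_sum[OF f l(1) z] l(2) by simp
  moreover have "x \<in> Hset S" by fact
  hence "f (smul N x) = N * f x" by (rule add_smul[OF H_subgrp f])
  ultimately show "f x = 0" using N by simp
qed





lemma card_le_times:
  assumes C: "infinite C" and A: "|A| \<le>o |C|" and B: "|B| \<le>o |C|"
  shows "|A \<times> B| \<le>o |C|"
  using card_of_Times_ordLeq_infinite_Field[of "|C|" A B] C A B by (simp add: Field_card_of card_of_Card_order card_of_card_order_on)

lemma card_le_un:
  assumes C: "infinite C" and A: "|A| \<le>o |C|" and B: "|B| \<le>o |C|"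
  shows "|A \<union> B| \<le>o |C|"
  using card_of_Un_ordLeq_infinite_Field[of "|C|" A B] C A B by (simp add: Field_card_of card_of_Card_order card_of_card_order_on)

lemma card_le_nat: "infinite C \<Longrightarrow> |UNIV :: nat set| \<le>o |C|"
  using infinite_iff_card_of_nat by blast

lemma card_le_int: assumes "infinite C" shows "|UNIV :: int set| \<le>o |C|"
proof -
  have "|UNIV :: int set| \<le>o |UNIV :: nat set|"
    using card_of_ordLeq[of "UNIV :: int set" "UNIV :: nat set"] inj_int_encode by blast
  thus ?thesis using card_le_nat[OF assms] ordLeq_transitive by blast
qed

lemma card_le_image: "|A| \<le>o |C| \<Longrightarrow> |f ` A| \<le>o |C|"
  using card_of_image ordLeq_transitive by blast

lemma card_le_lists:
  assumes C: "infinite C" and A: "|A| \<le>o |C|"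
  shows "|{l. set l \<subseteq> A}| \<le>o |C|"
proof -
  define Ls where "Ls n = {l. set l \<subseteq> A \<and> length l = n}" for n
  have Ln: "|Ls n| \<le>o |C|" for n
  proof (induction n)
    case 0
    have "Ls 0 = {[]}" by (auto simp: Ls_def)
    moreover have "C \<noteq> {}" using C by auto
    ultimately show ?case using card_of_singl_ordLeq by metis
  next
    case (Suc n)
    have "Ls (Suc n) \<subseteq> (\<lambda>(x,l). x # l) ` (A \<times> Ls n)"
    proof
      fix l assume "l \<in> Ls (Suc n)"
      then obtain x l' where "l = x # l'" "x \<in> A" "l' \<in> Ls n" by (cases l) (auto simp: Ls_def)
      thus "l \<in> (\<lambda>(x,l). x # l) ` (A \<times> Ls n)" by force
    qed
    moreover have "|(\<lambda>(x,l). x # l) ` (A \<times> Ls n)| \<le>o |C|"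
      by (rule card_le_image[OF card_le_times[OF C A Suc]])
    ultimately show ?case using card_of_mono1 ordLeq_transitive by blast
  qed
  have "{l. set l \<subseteq> A} = (\<Union>n\<in>UNIV. Ls n)" by (auto simp: Ls_def)
  also have "|\<Union>n\<in>UNIV. Ls n| \<le>o |C|"
    by (rule card_of_UNION_ordLeq_infinite[OF C card_le_nat[OF C]]) (simp add: Ln)
  finally show ?thesis .
qed

lemma Hset_card:
  assumes C: "infinite C" and S: "|S| \<le>o |C|"
  shows "|Hset S| \<le>o |C|"
proof -
  have A: "|(UNIV :: int set) \<times> S| \<le>o |C|" by (rule card_le_times[OF C card_le_int[OF C] S])
  have M: "|Mset S| \<le>o |C|" unfolding Mset_def by (rule card_le_image[OF card_le_lists[OF C A]])
  have "Hset S \<subseteq> (\<lambda>(N,m). (\<lambda>n. m n div N)) ` ((UNIV :: int set) \<times> Mset S)"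
  proof
    fix x assume "x \<in> Hset S"
    then obtain N where N: "N > 0" "smul N x \<in> Mset S" unfolding Hset_def by blast
    have "x = (\<lambda>n. smul N x n div N)" using N(1) by (simp add: smul_def)
    thus "x \<in> (\<lambda>(N,m). (\<lambda>n. m n div N)) ` ((UNIV :: int set) \<times> Mset S)"
      using N(2) by (intro image_eqI[of _ _ "(N, smul N x)"]) auto
  qed
  moreover have "|(\<lambda>(N,m). (\<lambda>n. m n div N)) ` ((UNIV :: int set) \<times> Mset S)| \<le>o |C|"
    by (rule card_le_image[OF card_le_times[OF C card_le_int[OF C] M]])
  ultimately show ?thesis using card_of_mono1 ordLeq_transitive by blast
qed





definition Emb :: "(nat \<Rightarrow> 'x) \<Rightarrow> (nat \<Rightarrow> int) \<Rightarrow> ('x \<Rightarrow> int)" where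
  "Emb emb v = (\<lambda>\<xi>. if \<xi> \<in> range emb then v (inv emb \<xi>) else 0)"

lemma Emb_add: "Emb emb (u + v) = Emb emb u + Emb emb v"
  by (auto simp: Emb_def fun_eq_iff)
lemma Emb_neg: "Emb emb (- u) = - Emb emb u"
  by (auto simp: Emb_def fun_eq_iff)
lemma Emb_zero: "Emb emb 0 = 0"
  by (auto simp: Emb_def fun_eq_iff)
lemma Emb_at: "inj emb \<Longrightarrow> Emb emb v (emb k) = v k"
  by (auto simp: Emb_def)

lemma transfer_self_binding:
  fixes H0 :: "(nat \<Rightarrow> int) set" and emb :: "nat \<Rightarrow> 'x"
  assumes emb: "inj emb" and H0: "subgrp H0" and eH: "\<forall>k. ee k \<in> H0"
    and i0: "\<forall>f::(nat\<Rightarrow>int)\<Rightarrow>int. additive_on H0 f \<longrightarrow> finite {k. f (ee k) \<noteq> 0}"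
    and ii0: "\<forall>f::(nat\<Rightarrow>int)\<Rightarrow>int. additive_on H0 f \<longrightarrow> (\<forall>k. f (ee k) = 0) \<longrightarrow> (\<forall>x\<in>H0. f x = 0)"
  shows "self_binding (Emb emb ` H0)"
proof -
  define H where "H = Emb emb ` H0"
  have sub: "subgrp H" unfolding subgrp_def H_def
  proof (intro conjI ballI)
    show "0 \<in> Emb emb ` H0" using H0 Emb_zero[of emb] unfolding subgrp_def by (metis imageI)
  next
    fix x y assume "x \<in> Emb emb ` H0" "y \<in> Emb emb ` H0"
    then obtain u v where "u \<in> H0" "v \<in> H0" "x = Emb emb u" "y = Emb emb v" by blast
    thus "x + y \<in> Emb emb ` H0" using H0 Emb_add[of emb u v] unfolding subgrp_def by (metis imageI)
  next
    fix x assume "x \<in> Emb emb ` H0"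
    then obtain u where "u \<in> H0" "x = Emb emb u" by blast
    thus "- x \<in> Emb emb ` H0" using H0 Emb_neg[of emb u] unfolding subgrp_def by (metis imageI)
  qed
  have tr: "additive_on H0 (\<lambda>x. f (Emb emb x))" if "additive_on H f" for f :: "('x\<Rightarrow>int)\<Rightarrow>int"
    using that unfolding additive_on_def H_def by (auto simp: Emb_add)
  define b where "b n = Emb emb (ee n)" for n
  have bH: "\<forall>n. b n \<in> H" using eH by (auto simp: b_def H_def)
  have i: "\<forall>f::('x\<Rightarrow>int)\<Rightarrow>int. additive_on H f \<longrightarrow> finite {n. f (b n) \<noteq> 0}"
    using i0 tr unfolding b_def by blast
  have ii: "\<forall>f::('x\<Rightarrow>int)\<Rightarrow>int. additive_on H f \<longrightarrow> (\<forall>n. f (b n) = 0) \<longrightarrow> (\<forall>x\<in>H. f x = 0)"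
  proof (intro allI impI ballI)
    fix f :: "('x\<Rightarrow>int)\<Rightarrow>int" and x
    assume f: "additive_on H f" and z: "\<forall>n. f (b n) = 0" and x: "x \<in> H"
    have "\<forall>y\<in>H0. f (Emb emb y) = 0" using ii0 tr[OF f] z unfolding b_def by blast
    thus "f x = 0" using x unfolding H_def by blast
  qed
  have binds: "binds H H" by (rule binds_criterion[OF bH i ii])
  have rank: "\<not> finite_rank H"
  proof
    assume "finite_rank H"
    then obtain n where n: "\<forall>A. A \<subseteq> H \<longrightarrow> Z_indep A \<longrightarrow> card A \<le> n" unfolding finite_rank_def by blast
    define A where "A = b ` {..n}"
    have binj: "inj b"
    proof (rule injI)
      fix k m assume "b k = b m"
      hence "b k (emb k) = b m (emb k)" by simp
      thus "k = m" using emb by (auto simp: b_def Emb_at ee_def split: if_splits)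
    qed
    have AH: "A \<subseteq> H" using bH by (auto simp: A_def)
    have cardA: "card A = Suc n" unfolding A_def by (simp add: card_image inj_on_subset[OF binj])
    have "Z_indep A"
      unfolding Z_indep_def
    proof (intro conjI allI impI ballI)
      show "finite A" by (simp add: A_def)
    next
      fix c :: "('x \<Rightarrow> int) \<Rightarrow> int" and a
      assume s: "\<forall>j. (\<Sum>a\<in>A. c a * a j) = 0" and a: "a \<in> A"
      then obtain k where k: "a = b k" by (auto simp: A_def)
      have val: "a' (emb k) = (if a' = a then 1 else 0)" if a'A: "a' \<in> A" for a'
      proof -
        obtain k' where k': "a' = b k'" using a'A by (auto simp: A_def)
        have "(a' = a) = (k' = k)" using binj k k' by (auto dest: injD)
        thus ?thesis using k' emb by (auto simp: b_def Emb_at ee_def)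
      qed
      have "(\<Sum>a'\<in>A. c a' * a' (emb k)) = (\<Sum>a'\<in>A. if a' = a then c a' else 0)"
      proof (rule sum.cong)
        fix a' assume "a' \<in> A"
        from val[OF this] show "c a' * a' (emb k) = (if a' = a then c a' else 0)" by simp
      qed simp
      also have "\<dots> = c a" using a by (simp add: A_def)
      finally show "c a = 0" using s by simp
    qed
    hence "card A \<le> n" using n AH by blast
    thus False using cardA by simp
  qed
  show ?thesis unfolding self_binding_def H_def[symmetric] using sub rank binds by blast
qed

definition sco :: "nat \<Rightarrow> int" where "sco n = (SOME s. \<exists>t. s * 2 ^ n + t * 3 ^ n = 1)"

lemma sco: "\<exists>t. sco n * 2 ^ n + t * 3 ^ n = 1"
proof -
  have "coprime ((2::int) ^ n) (3 ^ n)" by simp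
  hence "gcd ((2::int) ^ n) (3 ^ n) = 1" by (simp add: coprime_iff_gcd_eq_1)
  hence "\<exists>s t. s * (2::int) ^ n + t * 3 ^ n = 1" using bezout_int[of "2 ^ n" "3 ^ n"] by metis
  thus ?thesis unfolding sco_def by (rule someI_ex)
qed

definition Yf :: "(nat \<Rightarrow> int) \<Rightarrow> (nat \<Rightarrow> int)" where "Yf v = (\<lambda>n. v n * sco n * 2 ^ n)"
definition Zf :: "(nat \<Rightarrow> int) \<Rightarrow> (nat \<Rightarrow> int)" where "Zf v = (\<lambda>n. v n - Yf v n)"

lemma Yf_dvd: "2 ^ n dvd Yf v n" by (simp add: Yf_def)
lemma Zf_dvd: "3 ^ n dvd Zf v n"
proof -
  obtain t where t: "sco n * 2 ^ n + t * 3 ^ n = 1" using sco by blast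
  have e1: "Zf v n = v n * (1 - sco n * 2 ^ n)" by (simp add: Zf_def Yf_def algebra_simps)
  have e2: "1 - sco n * 2 ^ n = t * 3 ^ n" using t by linarith
  have "Zf v n = (v n * t) * 3 ^ n" unfolding e1 e2 by simp
  thus ?thesis by (metis dvd_triv_right)
qed
lemma YZ: "Yf v + Zf v = v" by (simp add: Zf_def fun_eq_iff)

theorem main:
  fixes G :: "('i \<Rightarrow> int) set"
  assumes "specker G"
  shows "\<exists>H :: ((('i \<Rightarrow> int) set) \<Rightarrow> int) set.
           self_binding H \<and> (\<exists>f. inj_on f H \<and> f ` H \<subseteq> G)"
proof -
  obtain a :: "nat \<Rightarrow> 'i \<Rightarrow> int" where G: "subgrp G" and aG: "\<forall>n. a n \<in> G" and anz: "\<forall>n. a n \<noteq> 0"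
    and Gsp: "\<forall>f :: ('i \<Rightarrow> int) \<Rightarrow> int. additive_on G f \<longrightarrow> finite {n. f (a n) \<noteq> 0}"
    using assms unfolding specker_def by blast
  have Ginf: "infinite G"
  proof
    assume fin: "finite G"
    have "range a \<subseteq> G" using aG by auto
    hence "finite (range a)" using fin finite_subset by blast
    then obtain v where v: "v \<in> range a" "infinite (a -` {v})" using inf_img_fin_dom[of a UNIV] by auto
    obtain i where i: "v i \<noteq> 0" using v(1) anz by (auto simp: fun_eq_iff)
    have "additive_on G (\<lambda>x. x i)" by (simp add: additive_on_def)
    hence "finite {n. a n i \<noteq> 0}" using Gsp by blast
    moreover have "a -` {v} \<subseteq> {n. a n i \<noteq> 0}" using i by auto
    ultimately show False using v(2) finite_subset by blast
  qed
  obtain nn :: "nat \<Rightarrow> nat" and \<phi> :: "nat \<Rightarrow> ('i \<Rightarrow> int) \<Rightarrow> int" where \<phi>add: "\<forall>k. additive_on G (\<phi> k)" and \<phi>nz: "\<forall>k. \<phi> k (a (nn k)) \<noteq> 0"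
    and \<phi>z: "\<forall>k m. k \<noteq> m \<longrightarrow> \<phi> k (a (nn m)) = 0"
    using biorth[OF Gsp anz] by blast
  define \<iota> where "\<iota> x = (\<lambda>k. \<phi> k x)" for x
  define Gen where "Gen = range ee \<union> Yf ` \<iota> ` G \<union> Zf ` \<iota> ` G"
  define H0 where "H0 = Hset Gen"
  have H0sub: "subgrp H0" unfolding H0_def by (rule H_subgrp)
  have eGen: "range ee \<subseteq> Gen" by (auto simp: Gen_def)
  have GenH: "Gen \<subseteq> H0" unfolding H0_def using M_gen M_sub_H by blast
  have eH: "\<forall>k. ee k \<in> H0" using eGen GenH by auto
  have \<iota>H: "\<iota> g \<in> H0" if "g \<in> G" for g
  proof -
    have "Yf (\<iota> g) \<in> H0" "Zf (\<iota> g) \<in> H0" using that GenH by (auto simp: Gen_def)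
    hence "Yf (\<iota> g) + Zf (\<iota> g) \<in> H0" using H0sub unfolding subgrp_def by blast
    thus ?thesis by (simp add: YZ)
  qed
  have \<iota>add: "\<iota> (x + y) = \<iota> x + \<iota> y" if "x \<in> G" "y \<in> G" for x y
    using \<phi>add that by (auto simp: \<iota>_def fun_eq_iff additive_on_def)
  have nninj: "inj nn"
  proof (rule injI)
    fix k m assume eq: "nn k = nn m"
    show "k = m"
    proof (rule ccontr)
      assume "k \<noteq> m"
      hence "\<phi> k (a (nn m)) = 0" using \<phi>z by blast
      thus False using eq \<phi>nz by metis
    qed
  qed
  have \<iota>a: "\<iota> (a (nn k)) = smul (\<phi> k (a (nn k))) (ee k)" for k
    using \<phi>z by (auto simp: \<iota>_def smul_def ee_def fun_eq_iff)
  have i0: "\<forall>f::(nat\<Rightarrow>int)\<Rightarrow>int. additive_on H0 f \<longrightarrow> finite {k. f (ee k) \<noteq> 0}"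
  proof (intro allI impI)
    fix f :: "(nat\<Rightarrow>int)\<Rightarrow>int" assume f: "additive_on H0 f"
    have "additive_on G (\<lambda>x. f (\<iota> x))"
      using f \<iota>H \<iota>add unfolding additive_on_def by simp
    hence fin: "finite {n. f (\<iota> (a n)) \<noteq> 0}" using Gsp by blast
    have "{k. f (ee k) \<noteq> 0} \<subseteq> nn -` {n. f (\<iota> (a n)) \<noteq> 0}"
    proof
      fix k assume "k \<in> {k. f (ee k) \<noteq> 0}"
      hence "f (ee k) \<noteq> 0" by simp
      moreover have "f (\<iota> (a (nn k))) = \<phi> k (a (nn k)) * f (ee k)"
        unfolding \<iota>a by (rule add_smul[OF H0sub f eH[rule_format]])
      ultimately show "k \<in> nn -` {n. f (\<iota> (a n)) \<noteq> 0}" using \<phi>nz by simp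
    qed
    moreover have "finite (nn -` {n. f (\<iota> (a n)) \<noteq> 0})" using finite_vimageI[OF fin nninj] .
    ultimately show "finite {k. f (ee k) \<noteq> 0}" using finite_subset by blast
  qed
  have Sform: "\<forall>u\<in>Gen. u \<in> range ee \<or> (\<forall>n. 2 ^ n dvd u n) \<or> (\<forall>n. 3 ^ n dvd u n)"
    using Yf_dvd Zf_dvd by (auto simp: Gen_def)
  have ii0: "\<forall>f::(nat\<Rightarrow>int)\<Rightarrow>int. additive_on H0 f \<longrightarrow> (\<forall>k. f (ee k) = 0) \<longrightarrow> (\<forall>x\<in>H0. f x = 0)"
    unfolding H0_def using H_determined[OF eGen Sform] by blast
  define emb :: "nat \<Rightarrow> ('i \<Rightarrow> int) set" where "emb n = {\<lambda>_. int n}" for n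
  have emb: "inj emb" by (rule injI) (auto simp: emb_def fun_eq_iff)
  have sb: "self_binding (Emb emb ` H0)" by (rule transfer_self_binding[OF emb H0sub eH i0 ii0])
  have cGen: "|Gen| \<le>o |G|"
  proof -
    have "|range ee| \<le>o |G|" using card_le_image[OF card_le_nat[OF Ginf]] .
    moreover have "|Yf ` \<iota> ` G| \<le>o |G|" "|Zf ` \<iota> ` G| \<le>o |G|"
      using card_le_image[OF card_le_image[OF ordLeq_refl[OF card_of_Card_order]]] by blast+
    ultimately show ?thesis unfolding Gen_def by (intro card_le_un[OF Ginf]) auto
  qed
  have "|Emb emb ` H0| \<le>o |G|"
    unfolding H0_def by (rule card_le_image[OF Hset_card[OF Ginf cGen]])
  hence "\<exists>f. inj_on f (Emb emb ` H0) \<and> f ` (Emb emb ` H0) \<subseteq> G" using card_of_ordLeq by blast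
  thus ?thesis using sb by blast
qed


theorem theorem7:
  fixes G :: "('i \<Rightarrow> int) set"
  assumes "specker G"
  shows "\<exists>H :: ((('i \<Rightarrow> int) set) \<Rightarrow> int) set.
           self_binding H \<and> (\<exists>f. inj_on f H \<and> f ` H \<subseteq> G)"
  by (rule main[OF assms])

end
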